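(* Let $P$ denote the set of prime numbers, and let $Q \subseteq P$ be a random subset in which each prime $p$ is included independently with probability $1/2$. Define the completely multiplicative function $\lambda_Q : \mathbb{N} \to \{-1,1\}$ by $\lambda_Q(p) = -1$ if $p \in Q$, $\lambda_Q(p) = 1$ if $p \notin Q$, extended by $\lambda_Q(p_1^{e_1}\cdots p_k^{e_k}) = \lambda_Q(p_1)^{e_1}\cdots\lambda_Q(p_k)^{e_k}$. Fix an integer $k \ge 0$ and positive integers $i_1 < i_2 < \dots < i_k$, and set \[ T_N = \frac{1}{N}\sum_{n=1}^N \lambda_Q(n)\lambda_Q(n+i_1)\cdots\lambda_Q(n+i_k). \] Then there is a constant $C$ (depending only on $i_1,\dots,i_k$) such that $E(T_N^2) \le C N^{-0.05}$ for all $N \ge 1$, where $E$ denotes expectation over the random choice of $Q$.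
   Context: $\mathbb{N} = \{1,2,3,\dots\}$. *)

theory Defs
  imports "HOL-Probability.Probability" "HOL-Computational_Algebra.Primes"
begin

text \<open>Probability space of independent fair coins indexed by the naturals;
  the random set of primes is Q(w) = {p. prime p and w p}, so each prime is
  included independently with probability 1/2.\<close>
definition coin_space :: "(nat \<Rightarrow> bool) measure" where
  "coin_space = PiM UNIV (\<lambda>_::nat. measure_pmf (bernoulli_pmf (1/2)))"

definition randQ :: "(nat \<Rightarrow> bool) \<Rightarrow> nat set" where
  "randQ w = {p. prime p \<and> w p}"

definition lambdaQ :: "nat set \<Rightarrow> nat \<Rightarrow> real" where
  "lambdaQ Q n = (\<Prod>p\<in>prime_factors n. (if p \<in> Q then -1 else 1) ^ multiplicity p n)"

definition T_avg :: "nat set \<Rightarrow> nat list \<Rightarrow> nat \<Rightarrow> real" where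
  "T_avg Q is N = (1 / real N) * (\<Sum>n=1..N. lambdaQ Q n * (\<Prod>i\<leftarrow>is. lambdaQ Q (n + i)))"

end

theory Submission
  imports Defs
begin


lemma card_pf_bound:
  fixes x L :: nat assumes x: "x > 0" and L: "L > 0"
  shows "(2::real) ^ card (prime_factors x) \<le> 2 ^ (2^L) * real x powr (1/L)"
proof -
  define P where "P = prime_factors x"
  define Sm where "Sm = {p\<in>P. p < 2^L}"
  define Lg where "Lg = {p\<in>P. p \<ge> 2^L}"
  have fin: "finite P" unfolding P_def by simp
  have cardP: "card P = card Sm + card Lg"
    unfolding Sm_def Lg_def using fin
    by (subst card_Un_disjoint[symmetric]) (auto intro!: arg_cong[where f=card])
  have "card Sm \<le> card {..<(2::nat)^L}" unfolding Sm_def by (intro card_mono) auto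
  hence cSm: "card Sm \<le> 2^L" by simp
  have "(2::real) ^ card Lg = (\<Prod>p\<in>Lg. 2)" by simp
  also have "\<dots> \<le> (\<Prod>p\<in>Lg. real p powr (1/L))"
  proof (rule prod_mono)
    fix p assume p: "p \<in> Lg"
    have "(2::real) = (2^L) powr (1/L)" using L
      by (simp add: powr_realpow[symmetric] powr_powr)
    also have "\<dots> \<le> real p powr (1/L)" using p L unfolding Lg_def
      by (intro powr_mono2) (auto simp flip: of_nat_power)
    finally show "0 \<le> (2::real) \<and> 2 \<le> real p powr (1/L)" by simp
  qed
  also have "\<dots> = (real (\<Prod>p\<in>Lg. p)) powr (1/L)"
    by (simp add: prod_powr_distrib)
  also have "\<dots> \<le> real x powr (1/L)"
  proof -
    have "(\<Prod>p\<in>Lg. p) dvd (\<Prod>p\<in>P. p ^ multiplicity p x)"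
      using fin unfolding Lg_def
    proof (intro prod_dvd_prod_subset2)
      fix p assume "p \<in> {p \<in> P. 2 ^ L \<le> p}"
      hence "p \<in> prime_factors x" unfolding P_def by auto
      hence "multiplicity p x \<noteq> 0" by (auto simp: prime_factors_multiplicity)
      thus "p dvd p ^ multiplicity p x" by simp
    qed auto
    also have "(\<Prod>p\<in>P. p ^ multiplicity p x) = x"
      unfolding P_def using x by (simp add: prod_prime_factors)
    finally have "(\<Prod>p\<in>Lg. p) \<le> x" using x by (intro dvd_imp_le) auto
    hence "real (\<Prod>p\<in>Lg. p) \<le> real x" by linarith
    thus ?thesis by (intro powr_mono2) (auto intro: prod_nonneg)
  qed
  finally have A: "(2::real) ^ card Lg \<le> real x powr (1/L)" .
  have B: "(2::real) ^ card Sm \<le> 2 ^ (2^L)" using cSm by (intro power_increasing) auto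
  have "(2::real) ^ card (prime_factors x) = 2 ^ card Sm * 2 ^ card Lg"
    by (simp add: P_def[symmetric] cardP power_add)
  also have "\<dots> \<le> 2 ^ (2^L) * real x powr (1/L)"
    using A B by (intro mult_mono) auto
  finally show ?thesis .
qed




abbreviation "bern \<equiv> measure_pmf (bernoulli_pmf (1/2))"

lemma prob_coin: "prob_space coin_space"
  unfolding coin_space_def by (intro prob_space_PiM) (auto simp: measure_pmf.prob_space_axioms)

lemma space_coin: "space coin_space = UNIV"
  unfolding coin_space_def by (auto simp: space_PiM PiE_def extensional_def)

lemma comp_meas: "(\<lambda>w. w q) \<in> measurable coin_space (count_space UNIV)"
proof -
  have "(\<lambda>w. w q) \<in> measurable coin_space bern"
    unfolding coin_space_def by (rule measurable_component_singleton) simp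
  moreover have "measurable coin_space bern = measurable coin_space (count_space UNIV)"
    by (rule measurable_cong_sets) auto
  ultimately show ?thesis by simp
qed

lemma lambda_meas: "(\<lambda>w. lambdaQ (randQ w) M) \<in> borel_measurable coin_space"
proof -
  have e: "(\<lambda>w. lambdaQ (randQ w) M) = (\<lambda>w. \<Prod>q\<in>prime_factors M.
      (\<lambda>b. (if prime q \<and> b then -1 else 1::real) ^ multiplicity q M) (w q))"
    unfolding lambdaQ_def randQ_def by auto
  show ?thesis unfolding e
    by (intro borel_measurable_prod measurable_compose[OF comp_meas]) simp
qed

lemma bern_not: "emeasure bern (Not -` X) = emeasure bern X"
proof -
  have rn: "range Not = UNIV"
  proof -
    have "x \<in> range Not" for x using image_eqI[of x Not "\<not> x" UNIV] by simp
    thus ?thesis by auto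
  qed
  have eq: "map_pmf Not (bernoulli_pmf (1/2)) = bernoulli_pmf (1/2)"
    unfolding bernoulli_pmf_half_conv_pmf_of_set
    by (subst map_pmf_of_set_inj) (auto intro: inj_onI simp: rn)
  have "emeasure bern (Not -` X) = emeasure (map_pmf Not (bernoulli_pmf (1/2))) X"
    by simp
  also have "\<dots> = emeasure bern X" by (simp only: eq)
  finally show ?thesis .
qed

lemma flip_meas: "(\<lambda>w. w(p := \<not> w p)) \<in> measurable coin_space coin_space"
proof -
  have "(\<lambda>w. w(p := \<not> w p)) \<in> measurable coin_space (Pi\<^sub>M UNIV (\<lambda>_. bern))"
  proof (rule measurable_PiM_single)
    fix A i assume "A \<in> sets bern"
    have "(\<lambda>w. w (if i = p then p else i)) \<in> measurable coin_space bern"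
      unfolding coin_space_def by (rule measurable_component_singleton) simp
    from measurable_sets[OF this, of "if i = p then Not -` A else A"]
    have "(\<lambda>w. w (if i = p then p else i)) -` (if i = p then Not -` A else A) \<inter> space coin_space \<in> sets coin_space"
      by simp
    moreover have "(\<lambda>w. w (if i = p then p else i)) -` (if i = p then Not -` A else A) \<inter> space coin_space
       = {w \<in> space coin_space. (w(p := \<not> w p)) i \<in> A}"
      by auto
    ultimately show "{w \<in> space coin_space. (w(p := \<not> w p)) i \<in> A} \<in> sets coin_space" by simp
  qed (auto simp: space_PiM)
  thus ?thesis by (simp only: coin_space_def)
qed

lemma flip_distr: "distr coin_space coin_space (\<lambda>w. w(p := \<not> w p)) = coin_space"
proof -
  have pm: "\<And>i. prob_space bern" by (simp add: measure_pmf.prob_space_axioms)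
  show ?thesis
  proof (subst (2) coin_space_def, rule measure_eqI_PiM_infinite[symmetric, OF refl])
    show "sets (distr coin_space coin_space (\<lambda>w. w(p := \<not> w p))) = sets (Pi\<^sub>M (UNIV::nat set) (\<lambda>_. bern))"
      by (simp add: coin_space_def)
    show "finite_measure (Pi\<^sub>M (UNIV::nat set) (\<lambda>_. bern))"
    proof -
      interpret prob_space "(Pi\<^sub>M (UNIV::nat set) (\<lambda>_. bern))"
        by (intro prob_space_PiM) (auto simp: measure_pmf.prob_space_axioms)
      show ?thesis by unfold_locales
    qed
  next
    fix A J assume J: "finite J" "J \<subseteq> (UNIV::nat set)" and A: "\<And>i. i \<in> J \<Longrightarrow> A i \<in> sets bern"
    define A' where "A' i = (if i = p then Not -` A i else A i)" for i
    have emb_eq: "(\<lambda>w. w(p := \<not> w p)) -` prod_emb UNIV (\<lambda>_. bern) J (Pi\<^sub>E J A) \<inter> space coin_space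
        = prod_emb UNIV (\<lambda>_. bern) J (Pi\<^sub>E J A')"
    proof -
      have pt: "((x(p := \<not> x p)) i \<in> A i) = (x i \<in> A' i)" for x i by (simp add: A'_def)
      show ?thesis unfolding space_coin prod_emb_def
        by (auto simp: PiE_iff space_PiM pt simp del: fun_upd_apply)
    qed
    have "emeasure (Pi\<^sub>M UNIV (\<lambda>_. bern)) (prod_emb UNIV (\<lambda>_. bern) J (Pi\<^sub>E J A))
        = (\<Prod>i\<in>J. emeasure bern (A i))"
      using J A by (intro emeasure_PiM_emb pm) auto
    also have "\<dots> = (\<Prod>i\<in>J. emeasure bern (A' i))"
      unfolding A'_def by (intro prod.cong) (auto simp: bern_not)
    also have "\<dots> = emeasure (Pi\<^sub>M UNIV (\<lambda>_. bern)) (prod_emb UNIV (\<lambda>_. bern) J (Pi\<^sub>E J A'))"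
      using J by (intro emeasure_PiM_emb[symmetric] pm) auto
    also have "\<dots> = emeasure (distr coin_space coin_space (\<lambda>w. w(p := \<not> w p))) (prod_emb UNIV (\<lambda>_. bern) J (Pi\<^sub>E J A))"
    proof -
      have "emeasure (Pi\<^sub>M UNIV (\<lambda>_. bern)) (prod_emb UNIV (\<lambda>_. bern) J (Pi\<^sub>E J A'))
          = emeasure coin_space (prod_emb UNIV (\<lambda>_. bern) J (Pi\<^sub>E J A'))" by (simp add: coin_space_def)
      also have "\<dots> = emeasure coin_space ((\<lambda>w. w(p := \<not> w p)) -` prod_emb UNIV (\<lambda>_. bern) J (Pi\<^sub>E J A) \<inter> space coin_space)"
        by (simp only: emb_eq)
      also have "\<dots> = emeasure (distr coin_space coin_space (\<lambda>w. w(p := \<not> w p))) (prod_emb UNIV (\<lambda>_. bern) J (Pi\<^sub>E J A))"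
        by (rule emeasure_distr[symmetric, OF flip_meas]) (unfold coin_space_def, use J A in \<open>intro sets_PiM_I, auto\<close>)
      finally show ?thesis .
    qed
    finally show "emeasure (Pi\<^sub>M UNIV (\<lambda>_. bern)) (prod_emb UNIV (\<lambda>_. bern) J (Pi\<^sub>E J A)) =
       emeasure (distr coin_space coin_space (\<lambda>w. w(p := \<not> w p))) (prod_emb UNIV (\<lambda>_. bern) J (Pi\<^sub>E J A))" .
  qed
qed




lemma lambda_abs: "\<bar>lambdaQ Q x\<bar> = 1"
  unfolding lambdaQ_def abs_prod by (intro prod.neutral) (simp add: power_abs)

lemma lambda_flip:
  assumes p: "prime p" and M: "M > 0" and odd: "odd (multiplicity p M)"
  shows "lambdaQ (randQ (w(p := \<not> w p))) M = - lambdaQ (randQ w) M"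
proof -
  have pin: "p \<in> prime_factors M"
    using odd p M by (auto simp: prime_factors_multiplicity intro!: Nat.gr0I)
  define s where "s w' q = (if q \<in> randQ w' then -1 else (1::real)) ^ multiplicity q M" for w' q
  have "lambdaQ (randQ (w(p := \<not> w p))) M = s (w(p := \<not> w p)) p * (\<Prod>q\<in>prime_factors M - {p}. s (w(p := \<not> w p)) q)"
    unfolding lambdaQ_def s_def using pin by (subst prod.remove) auto
  also have "(\<Prod>q\<in>prime_factors M - {p}. s (w(p := \<not> w p)) q) = (\<Prod>q\<in>prime_factors M - {p}. s w q)"
    by (intro prod.cong) (auto simp: s_def randQ_def)
  also have "s (w(p := \<not> w p)) p = - s w p"
    using odd p by (auto simp: s_def randQ_def)
  also have "- s w p * (\<Prod>q\<in>prime_factors M - {p}. s w q) = - lambdaQ (randQ w) M"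
    unfolding lambdaQ_def s_def using pin by (subst (2) prod.remove) auto
  finally show ?thesis .
qed

lemma E_zero:
  assumes p: "prime p" and M: "M > 0" and odd: "odd (multiplicity p M)"
  shows "(\<integral>w. lambdaQ (randQ w) M \<partial>coin_space) = 0"
proof -
  let ?f = "\<lambda>w. lambdaQ (randQ w) M"
  have "integral\<^sup>L coin_space ?f = integral\<^sup>L (distr coin_space coin_space (\<lambda>w. w(p := \<not> w p))) ?f"
    by (simp add: flip_distr)
  also have "\<dots> = (\<integral>w. ?f (w(p := \<not> w p)) \<partial>coin_space)"
    by (rule integral_distr[OF flip_meas lambda_meas])
  also have "\<dots> = (\<integral>w. - ?f w \<partial>coin_space)"
    using lambda_flip[OF assms] by simp
  also have "\<dots> = - integral\<^sup>L coin_space ?f" by simp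
  finally show ?thesis by simp
qed

lemma integrable_lambda: "integrable coin_space (\<lambda>w. lambdaQ (randQ w) M)"
proof -
  interpret prob_space coin_space by (rule prob_coin)
  show ?thesis
    by (rule integrable_const_bound[where B=1]) (auto simp: lambda_abs lambda_meas)
qed

lemma E_le1: "(\<integral>w. lambdaQ (randQ w) M \<partial>coin_space) \<le> 1"
proof -
  interpret prob_space coin_space by (rule prob_coin)
  have "(\<integral>w. lambdaQ (randQ w) M \<partial>coin_space) \<le> (\<integral>w. 1 \<partial>coin_space)"
  proof (intro integral_mono integrable_lambda)
    fix w show "lambdaQ (randQ w) M \<le> 1" using lambda_abs[of "randQ w" M] by (simp add: abs_le_iff)
  qed auto
  also have "\<dots> = 1" by (simp add: prob_space)
  finally show ?thesis .
qed

lemma lambda_mult: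
  assumes a: "a > 0" and b: "b > 0"
  shows "lambdaQ Q (a * b) = lambdaQ Q a * lambdaQ Q b"
proof -
  define s where "s q = (if q \<in> Q then -1 else (1::real))" for q
  define U where "U = prime_factors (a*b)"
  have U: "U = prime_factors a \<union> prime_factors b" unfolding U_def using a b
    by (simp add: prime_factors_product)
  have gen: "lambdaQ Q x = (\<Prod>q\<in>U. s q ^ multiplicity q x)" if "prime_factors x \<subseteq> U" for x
    unfolding lambdaQ_def s_def
  proof (rule prod.mono_neutral_left)
    show "finite U" unfolding U_def by simp
    show "\<forall>i\<in>U - prime_factors x. (if i \<in> Q then - 1 else 1) ^ multiplicity i x = (1::real)"
    proof
      fix i assume i: "i \<in> U - prime_factors x"
      hence "prime i" unfolding U_def by auto
      with i have "multiplicity i x = 0" by (auto simp: prime_factors_multiplicity)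
      thus "(if i \<in> Q then - 1 else 1) ^ multiplicity i x = (1::real)" by simp
    qed
  qed (use that in auto)
  have "lambdaQ Q (a*b) = (\<Prod>q\<in>U. s q ^ multiplicity q (a*b))" by (rule gen) (simp add: U_def)
  also have "\<dots> = (\<Prod>q\<in>U. s q ^ multiplicity q a * s q ^ multiplicity q b)"
  proof (intro prod.cong refl)
    fix q assume "q \<in> U"
    hence "prime q" unfolding U_def by auto
    thus "s q ^ multiplicity q (a*b) = s q ^ multiplicity q a * s q ^ multiplicity q b"
      using a b by (simp add: prime_elem_multiplicity_mult_distrib power_add)
  qed
  also have "\<dots> = lambdaQ Q a * lambdaQ Q b"
    by (subst prod.distrib) (simp add: gen U)
  finally show ?thesis .
qed




definition FF :: "nat list \<Rightarrow> nat \<Rightarrow> nat" where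
  "FF l n = n * prod_list (map (\<lambda>i. n+i) l)"

lemma FF_pos: "n > 0 \<Longrightarrow> FF l n > 0"
proof -
  assume n: "n > 0"
  have "0 \<notin> set (map (\<lambda>i. n+i) l)" using n by auto
  hence "prod_list (map (\<lambda>i. n+i) l) \<noteq> 0" by (simp add: prod_list_zero_iff del: set_map)
  thus ?thesis using n unfolding FF_def by simp
qed

lemma mult_aux:
  fixes p n x :: nat
  assumes "prime p" "\<forall>i\<in>set l. \<not> p dvd (n+i)" "n > 0"
  shows "x > 0 \<Longrightarrow> multiplicity p (x * prod_list (map (\<lambda>i. n+i) l)) = multiplicity p x"
  using assms(2)
proof (induction l arbitrary: x)
  case (Cons a l)
  have "x * prod_list (map (\<lambda>i. n+i) (a#l)) = (x * (n+a)) * prod_list (map (\<lambda>i. n+i) l)" by (simp add: mult.assoc)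
  also have "multiplicity p \<dots> = multiplicity p (x * (n+a))"
  proof (rule Cons.IH)
    show "0 < x * (n+a)" using Cons.prems(1) assms(3) by simp
    show "\<forall>i\<in>set l. \<not> p dvd n + i" using Cons.prems(2) by simp
  qed
  also have "\<dots> = multiplicity p x + multiplicity p (n+a)"
    using Cons assms by (intro prime_elem_multiplicity_mult_distrib) auto
  also have "multiplicity p (n+a) = 0" using Cons by (intro not_dvd_imp_multiplicity_0) auto
  finally show ?case by simp
qed simp

lemma decomp:
  fixes n :: nat assumes n: "n > 0"
  shows "n = \<Prod>{p\<in>prime_factors n. odd (multiplicity p n)} * (\<Prod>p\<in>prime_factors n. p^(multiplicity p n div 2))^2"
proof -
  have "\<Prod>{p\<in>prime_factors n. odd (multiplicity p n)} = (\<Prod>p\<in>prime_factors n. if odd (multiplicity p n) then p else 1)"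
    by (simp add: prod.inter_filter)
  moreover have "(\<Prod>p\<in>prime_factors n. p^(multiplicity p n div 2))^2 = (\<Prod>p\<in>prime_factors n. (p^(multiplicity p n div 2))^2)"
    by (simp add: prod_power_distrib)
  ultimately have "\<Prod>{p\<in>prime_factors n. odd (multiplicity p n)} * (\<Prod>p\<in>prime_factors n. p^(multiplicity p n div 2))^2
      = (\<Prod>p\<in>prime_factors n. (if odd (multiplicity p n) then p else 1) * (p^(multiplicity p n div 2))^2)"
    by (simp add: prod.distrib)
  also have "\<dots> = (\<Prod>p\<in>prime_factors n. p ^ multiplicity p n)"
  proof (intro prod.cong refl)
    fix p
    define m where "m = multiplicity p n"
    have sq: "(p^(m div 2))^2 = p^(m div 2 + m div 2)" by (simp add: power2_eq_square power_add)
    have "p ^ m = (if odd m then p else 1) * (p^(m div 2))^2"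
    proof (cases "odd m")
      case True
      hence "m = Suc (m div 2 + m div 2)" by presburger
      hence "p ^ m = p * p^(m div 2 + m div 2)" by (metis power_Suc)
      thus ?thesis using True sq by simp
    next
      case False
      hence "m = m div 2 + m div 2" by presburger
      hence "p ^ m = p^(m div 2 + m div 2)" by simp
      thus ?thesis using False sq by simp
    qed
    thus "(if odd (multiplicity p n) then p else 1) * (p^(multiplicity p n div 2))^2 = p ^ multiplicity p n"
      unfolding m_def by simp
  qed
  also have "\<dots> = n" using n by (simp add: prod_prime_factors)
  finally show ?thesis by simp
qed

lemma good_subset:
  assumes n: "n > 0" and m: "m > 0" and l: "\<forall>i\<in>set l. 0 < i \<and> i \<le> K"
    and good: "\<forall>p. prime p \<longrightarrow> even (multiplicity p (FF l n * FF l m))"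
  shows "{p\<in>prime_factors n. odd (multiplicity p n)} \<subseteq> {p. prime p \<and> (p \<le> K \<or> p dvd FF l m)}"
proof
  fix p assume "p \<in> {p\<in>prime_factors n. odd (multiplicity p n)}"
  hence p: "prime p" "p dvd n" "odd (multiplicity p n)" by (auto simp: in_prime_factors_iff)
  show "p \<in> {p. prime p \<and> (p \<le> K \<or> p dvd FF l m)}"
  proof (cases "p \<le> K")
    case False
    have nd: "\<forall>i\<in>set l. \<not> p dvd (n+i)"
    proof
      fix i assume i: "i \<in> set l"
      show "\<not> p dvd (n+i)"
      proof
        assume "p dvd n+i"
        with p have "p dvd i" by (simp add: dvd_add_right_iff)
        with l i have "p \<le> i" by (auto intro: dvd_imp_le)
        with l i False show False by auto
      qed
    qed
    have "multiplicity p (FF l n) = multiplicity p n"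
      unfolding FF_def using p nd n by (intro mult_aux) auto
    moreover have "multiplicity p (FF l n * FF l m) = multiplicity p (FF l n) + multiplicity p (FF l m)"
      using p FF_pos n m by (intro prime_elem_multiplicity_mult_distrib) auto
    ultimately have "odd (multiplicity p (FF l m))" using good p by auto
    hence "multiplicity p (FF l m) \<noteq> 0" by presburger
    hence "p dvd FF l m" using not_dvd_imp_multiplicity_0[of p "FF l m"] by auto
    with p show ?thesis by auto
  qed (use p in auto)
qed

lemma count_bound:
  assumes m: "m > 0" and l: "\<forall>i\<in>set l. 0 < i \<and> i \<le> K"
  shows "real (card {n\<in>{1..N}. \<forall>p. prime p \<longrightarrow> even (multiplicity p (FF l n * FF l m))})
     \<le> 2^(K+1) * 2^card (prime_factors (FF l m)) * (sqrt N + 1)"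
proof -
  define S where "S = {p. prime p \<and> (p \<le> K \<or> p dvd FF l m)}"
  define k where "k = nat \<lfloor>sqrt N\<rfloor>"
  have Ssub: "S \<subseteq> {..K} \<union> prime_factors (FF l m)"
    unfolding S_def using FF_pos[OF m] by (auto simp: in_prime_factors_iff)
  have finS: "finite S" by (rule finite_subset[OF Ssub]) auto
  have cS: "card S \<le> (K+1) + card (prime_factors (FF l m))"
    using card_mono[OF _ Ssub] card_Un_le[of "{..K}" "prime_factors (FF l m)"] by auto
  have sub: "{n\<in>{1..N}. \<forall>p. prime p \<longrightarrow> even (multiplicity p (FF l n * FF l m))}
      \<subseteq> (\<lambda>(A,x). \<Prod>A * x^2) ` (Pow S \<times> {0..k})"
  proof
    fix n assume "n \<in> {n\<in>{1..N}. \<forall>p. prime p \<longrightarrow> even (multiplicity p (FF l n * FF l m))}"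
    hence n: "n \<ge> 1" "n \<le> N" and g: "\<forall>p. prime p \<longrightarrow> even (multiplicity p (FF l n * FF l m))" by auto
    define A where "A = {p\<in>prime_factors n. odd (multiplicity p n)}"
    define x where "x = (\<Prod>p\<in>prime_factors n. p^(multiplicity p n div 2))"
    have e: "n = \<Prod>A * x^2" unfolding A_def x_def using n by (intro decomp) auto
    have AS: "A \<subseteq> S" unfolding A_def S_def using n m l g by (intro good_subset) auto
    have "\<Prod>A \<noteq> 0" using e n by (cases "\<Prod>A = 0") auto
    have "1 * x^2 \<le> \<Prod>A * x^2" by (rule mult_le_mono1) (use \<open>\<Prod>A \<noteq> 0\<close> in linarith)
    hence "x^2 \<le> N" using e n by linarith
    hence "real (x^2) \<le> real N" by (simp only: of_nat_le_iff)
    hence "real x ^2 \<le> real N" by simp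
    hence "real x \<le> sqrt N" by (simp add: real_le_rsqrt)
    hence "x \<le> k" unfolding k_def by (simp add: le_nat_floor)
    with AS e show "n \<in> (\<lambda>(A,x). \<Prod>A * x^2) ` (Pow S \<times> {0..k})" by force
  qed
  have "card {n\<in>{1..N}. \<forall>p. prime p \<longrightarrow> even (multiplicity p (FF l n * FF l m))} \<le> card (Pow S \<times> {0..k})"
    by (rule order.trans[OF card_mono[OF _ sub] card_image_le]) (auto simp: finS)
  also have "\<dots> = 2^card S * (k+1)" by (simp add: card_cartesian_product card_Pow finS)
  finally have c1: "real (card {n\<in>{1..N}. \<forall>p. prime p \<longrightarrow> even (multiplicity p (FF l n * FF l m))}) \<le> 2^card S * (real k+1)"
  proof -
    assume "card {n\<in>{1..N}. \<forall>p. prime p \<longrightarrow> even (multiplicity p (FF l n * FF l m))} \<le> 2^card S * (k+1)"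
    hence "real (card {n\<in>{1..N}. \<forall>p. prime p \<longrightarrow> even (multiplicity p (FF l n * FF l m))}) \<le> real (2^card S * (k+1))"
      by (simp only: of_nat_le_iff)
    thus ?thesis by (simp add: algebra_simps)
  qed
  have "real k \<le> sqrt N" unfolding k_def by simp
  hence r1: "(2::real)^card S * (real k+1) \<le> 2^card S * (sqrt N + 1)" by simp
  have "(2::real)^card S \<le> 2^(K+1 + card (prime_factors (FF l m)))"
    using cS by (intro power_increasing) auto
  hence r2: "(2::real)^card S * (sqrt N + 1) \<le> 2^(K+1 + card (prime_factors (FF l m))) * (sqrt N + 1)"
    by (intro mult_right_mono) auto
  have r3: "(2::real)^(K+1 + card (prime_factors (FF l m))) = 2^(K+1) * 2^card (prime_factors (FF l m))"
    by (simp add: power_add)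
  show ?thesis using c1 r1 r2 unfolding r3 by linarith
qed




lemma lambda_prodlist:
  fixes n :: nat assumes n: "n > 0"
  shows "x > 0 \<Longrightarrow> lambdaQ Q x * (\<Prod>i\<leftarrow>l. lambdaQ Q (n + i)) = lambdaQ Q (x * prod_list (map (\<lambda>i. n+i) l))"
proof (induction l arbitrary: x)
  case (Cons a l)
  have "lambdaQ Q x * (\<Prod>i\<leftarrow>a#l. lambdaQ Q (n + i)) = (lambdaQ Q x * lambdaQ Q (n+a)) * (\<Prod>i\<leftarrow>l. lambdaQ Q (n + i))"
    by (simp add: mult.assoc)
  also have "lambdaQ Q x * lambdaQ Q (n+a) = lambdaQ Q (x * (n+a))"
    using Cons.prems n by (simp add: lambda_mult)
  also have "lambdaQ Q (x * (n+a)) * (\<Prod>i\<leftarrow>l. lambdaQ Q (n + i)) = lambdaQ Q ((x * (n+a)) * prod_list (map (\<lambda>i. n+i) l))"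
    by (rule Cons.IH) (use Cons.prems n in simp)
  finally show ?case by (simp add: mult.assoc)
qed simp

lemma T_avg_eq: "T_avg Q l N = (1 / real N) * (\<Sum>n=1..N. lambdaQ Q (FF l n))"
  unfolding T_avg_def FF_def
  by (intro arg_cong[where f="\<lambda>x. _ * x"] sum.cong refl) (auto simp: lambda_prodlist)

lemma FF_le: "\<forall>i\<in>set l. i \<le> K \<Longrightarrow> FF l m \<le> (m+K)^(length l + 1)"
proof -
  assume l: "\<forall>i\<in>set l. i \<le> K"
  have "prod_list (map (\<lambda>i. m+i) l) \<le> (m+K)^length l"
    using l by (induction l) (auto intro!: mult_le_mono)
  thus ?thesis unfolding FF_def by (auto intro!: mult_le_mono)
qed




theorem mainTheorem2:
  fixes "is" :: "nat list"
  assumes "sorted_wrt (<) is" and "\<forall>i\<in>set is. 0 < i"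
  shows "\<exists>C::real. \<forall>N::nat. N \<ge> 1 \<longrightarrow>
           (\<integral>w. (T_avg (randQ w) is N)\<^sup>2 \<partial>coin_space) \<le> C * real N powr (-0.05)"
proof -
  define K where "K = sum_list is"
  define L where "L = 4 * (length is + 1)"
  have l: "\<forall>i\<in>set is. 0 < i \<and> i \<le> K"
    using assms(2) unfolding K_def by (auto intro: member_le_sum_list)
  have Lpos: "L > 0" unfolding L_def by simp
  define C where "C = 2 * 2^(K+1) * 2^(2^L) * (real K + 1)"
  have Cpos: "C \<ge> 0" unfolding C_def by simp
  interpret prob_space coin_space by (rule prob_coin)
  show ?thesis
  proof (intro exI allI impI)
    fix N :: nat assume N: "N \<ge> 1"
    define good where "good n m = (\<forall>p. prime p \<longrightarrow> even (multiplicity p (FF is n * FF is m)))" for n m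
    define E where "E n m = (\<integral>w. lambdaQ (randQ w) (FF is n * FF is m) \<partial>coin_space)" for n m
    have sq: "(T_avg (randQ w) is N)\<^sup>2 = (1 / real N)^2 * (\<Sum>n=1..N. \<Sum>m=1..N. lambdaQ (randQ w) (FF is n * FF is m))" for w
    proof -
      have "(T_avg (randQ w) is N)\<^sup>2 = (1 / real N)^2 * ((\<Sum>n=1..N. lambdaQ (randQ w) (FF is n)) * (\<Sum>m=1..N. lambdaQ (randQ w) (FF is m)))"
        by (simp add: T_avg_eq power2_eq_square)
      also have "(\<Sum>n=1..N. lambdaQ (randQ w) (FF is n)) * (\<Sum>m=1..N. lambdaQ (randQ w) (FF is m))
          = (\<Sum>n=1..N. \<Sum>m=1..N. lambdaQ (randQ w) (FF is n * FF is m))"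
        by (subst sum_product) (intro sum.cong refl, auto simp: lambda_mult FF_pos)
      finally show ?thesis .
    qed
    have int_eq: "(\<integral>w. (T_avg (randQ w) is N)\<^sup>2 \<partial>coin_space) = (1 / real N)^2 * (\<Sum>n=1..N. \<Sum>m=1..N. E n m)"
    proof -
      have "(\<integral>w. (T_avg (randQ w) is N)\<^sup>2 \<partial>coin_space) = (1 / real N)^2 * (\<integral>w. (\<Sum>n=1..N. \<Sum>m=1..N. lambdaQ (randQ w) (FF is n * FF is m)) \<partial>coin_space)"
        unfolding sq by (rule integral_mult_right_zero)
      also have "(\<integral>w. (\<Sum>n=1..N. \<Sum>m=1..N. lambdaQ (randQ w) (FF is n * FF is m)) \<partial>coin_space)
          = (\<Sum>n=1..N. (\<integral>w. (\<Sum>m=1..N. lambdaQ (randQ w) (FF is n * FF is m)) \<partial>coin_space))"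
      proof (rule Bochner_Integration.integral_sum[where M=coin_space and f="\<lambda>n w. \<Sum>m=1..N. lambdaQ (randQ w) (FF is n * FF is m)"])
        fix n show "integrable coin_space (\<lambda>w. \<Sum>m=1..N. lambdaQ (randQ w) (FF is n * FF is m))"
          by (rule Bochner_Integration.integrable_sum[where f="\<lambda>m w. lambdaQ (randQ w) (FF is n * FF is m)"]) (rule integrable_lambda)
      qed
      also have "\<dots> = (\<Sum>n=1..N. \<Sum>m=1..N. E n m)"
        unfolding E_def
      proof (intro sum.cong refl)
        fix n show "(\<integral>w. (\<Sum>m=1..N. lambdaQ (randQ w) (FF is n * FF is m)) \<partial>coin_space)
           = (\<Sum>m=1..N. (\<integral>w. lambdaQ (randQ w) (FF is n * FF is m) \<partial>coin_space))"
          by (rule Bochner_Integration.integral_sum[where M=coin_space and f="\<lambda>m w. lambdaQ (randQ w) (FF is n * FF is m)"]) (rule integrable_lambda)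
      qed
      finally show ?thesis .
    qed
    have Ele: "E n m \<le> (if good n m then 1 else 0)" if "n \<ge> 1" "m \<ge> 1" for n m
    proof (cases "good n m")
      case True thus ?thesis unfolding E_def by (simp add: E_le1)
    next
      case False
      then obtain p where "prime p" "odd (multiplicity p (FF is n * FF is m))" unfolding good_def by auto
      moreover have "FF is n * FF is m > 0" using that FF_pos by simp
      ultimately have "E n m = 0" unfolding E_def by (intro E_zero)
      thus ?thesis by simp
    qed
    have "(\<Sum>n=1..N. \<Sum>m=1..N. E n m) \<le> (\<Sum>n=1..N. \<Sum>m=1..N. if good n m then 1 else (0::real))"
      by (intro sum_mono Ele) auto
    also have "\<dots> = (\<Sum>m=1..N. \<Sum>n=1..N. if good n m then 1 else (0::real))"
      by (rule sum.swap)
    also have "\<dots> = (\<Sum>m=1..N. real (card {n\<in>{1..N}. good n m}))"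
      by (intro sum.cong refl) (simp add: sum.inter_filter[symmetric])
    also have "\<dots> \<le> (\<Sum>m=1..N. C * real N powr (3/4))"
    proof (intro sum_mono)
      fix m assume m: "m \<in> {1..N}"
      have c: "real (card {n\<in>{1..N}. good n m}) \<le> 2^(K+1) * 2^card (prime_factors (FF is m)) * (sqrt N + 1)"
        unfolding good_def using m l by (intro count_bound) auto
      have "(2::real)^card (prime_factors (FF is m)) \<le> 2 ^ (2^L) * real (FF is m) powr (1/L)"
        using m Lpos FF_pos by (intro card_pf_bound) auto
      also have "real (FF is m) powr (1/L) \<le> real ((N+K)^(length is + 1)) powr (1/L)"
      proof -
        have "FF is m \<le> (m+K)^(length is + 1)" using l by (intro FF_le) auto
        also have "\<dots> \<le> (N+K)^(length is + 1)" using m by (intro power_mono) auto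
        finally have "real (FF is m) \<le> real ((N+K)^(length is + 1))" by (simp only: of_nat_le_iff)
        thus ?thesis by (intro powr_mono2) auto
      qed
      also have "real ((N+K)^(length is + 1)) powr (1/L) = real (N+K) powr (1/4)"
      proof -
        have "real (N+K) powr real (length is + 1) = real (N+K) ^ (length is + 1)"
          by (rule powr_realpow) (use N in simp)
        hence "real ((N+K)^(length is + 1)) = real (N+K) powr real (length is + 1)"
          by (simp only: of_nat_power)
        hence "real ((N+K)^(length is + 1)) powr (1/L) = real (N+K) powr (real (length is + 1) * (1/L))"
          by (simp add: powr_powr)
        also have "real (length is + 1) * (1/L) = 1/4" unfolding L_def by simp
        finally show ?thesis .
      qed
      also have "real (N+K) powr (1/4) \<le> real ((K+1)*N) powr (1/4)"
      proof (intro powr_mono2)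
        have "real K * 1 \<le> real K * real N" using N by (intro mult_left_mono) auto
        thus "real (N+K) \<le> real ((K+1)*N)" by (simp add: algebra_simps)
      qed auto
      also have "real ((K+1)*N) powr (1/4) = real (K+1) powr (1/4) * real N powr (1/4)"
        by (simp only: of_nat_mult, rule powr_mult)
      also have "real (K+1) powr (1/4) \<le> real (K+1) powr 1"
        by (intro powr_mono) auto
      hence "real (K+1) powr (1/4) * real N powr (1/4) \<le> (real K + 1) * real N powr (1/4)"
        by (intro mult_right_mono) auto
      finally have b1: "(2::real)^card (prime_factors (FF is m)) \<le> 2^(2^L) * ((real K + 1) * real N powr (1/4))"
        by simp
      have b2: "sqrt N + 1 \<le> 2 * real N powr (1/2)"
      proof -
        have "1 \<le> sqrt N" using N by simp
        thus ?thesis by (simp add: powr_half_sqrt)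
      qed
      have "real (card {n\<in>{1..N}. good n m}) \<le> 2^(K+1) * (2^(2^L) * ((real K + 1) * real N powr (1/4))) * (2 * real N powr (1/2))"
        using c b1 b2 by (intro order.trans[OF c] mult_mono) auto
      also have "\<dots> = C * (real N powr (1/4) * real N powr (1/2))"
        unfolding C_def by (simp add: algebra_simps)
      also have "real N powr (1/4) * real N powr (1/2) = real N powr (3/4)"
        by (simp add: powr_add[symmetric])
      finally show "real (card {n\<in>{1..N}. good n m}) \<le> C * real N powr (3/4)" .
    qed
    also have "\<dots> = real N * (C * real N powr (3/4))" by simp
    finally have S: "(\<Sum>n=1..N. \<Sum>m=1..N. E n m) \<le> real N * (C * real N powr (3/4))" .
    have "(\<integral>w. (T_avg (randQ w) is N)\<^sup>2 \<partial>coin_space) \<le> (1 / real N)^2 * (real N * (C * real N powr (3/4)))"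
      unfolding int_eq by (intro mult_left_mono S) auto
    also have "\<dots> = C * (real N powr (3/4) / real N powr 1)"
      using N by (simp add: power2_eq_square field_simps)
    also have "real N powr (3/4) / real N powr 1 = real N powr (-1/4)"
      using powr_diff[of "real N" "3/4" 1] by simp
    also have "C * real N powr (-1/4) \<le> C * real N powr (-0.05)"
      using N Cpos by (intro mult_left_mono powr_mono) auto
    finally show "(\<integral>w. (T_avg (randQ w) is N)\<^sup>2 \<partial>coin_space) \<le> C * real N powr (-0.05)" .
  qed
qed


end
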